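(* Let $(X,J)$ be the compact almost-complex manifold described in the context. Then $h^{1,0}_{\mathrm{Dol}}=1$ (spanned by $\Phi^1$), $h^{2,0}_{\mathrm{Dol}}=0$, $h^{3,0}_{\mathrm{Dol}}=0$.
   Context: General notions. For an almost-complex manifold $(X,J)$, $A^k(X)=\bigoplus_{p+q=k}A^{p,q}(X)$ and $d=\mu+\partial+\overline{\partial}+\bar\mu$ with $\mu:A^{p,q}\to A^{p+2,q-1}$, $\partial:A^{p,q}\to A^{p+1,q}$, $\overline{\partial}:A^{p,q}\to A^{p,q+1}$, $\bar\mu:A^{p,q}\to A^{p-1,q+2}$. The almost-complex Dolbeault cohomology (of Cirici–Wilson) in bidegree $(p,0)$ is $H^{p,0}_{\mathrm{Dol}}(X)=\{\psi\in A^{p,0}(X):\overline{\partial}\psi=0,\ \bar\mu\psi=0\}$, and $h^{p,0}_{\mathrm{Dol}}$ is its complex dimension. The manifold. Let $G$ be the Lie group $\mathbb{R}^2\ltimes_\Phi\mathbb{R}^4$ with coordinates $(t,x,y_1,y_2,z_1,z_2)$ and product $(t,x,y_1,y_2,z_1,z_2)*(t',x',y_1',y_2',z_1',z_2')=(t+t',x+x',y_1'e^t+xz_1'e^t+y_1,\,y_2'e^{-t}+xz_2'e^{-t}+y_2,\,z_1'e^t+z_1,\,z_2'e^{-t}+z_2)$. Let $B\in SL(2,\mathbb{Z})$ have distinct eigenvalues $e^{a_0},e^{-a_0}$ ($a_0>0$) and $P$ real invertible with $PBP^{-1}=\mathrm{diag}(e^{a_0},e^{-a_0})$. Let $\Gamma$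 be the lattice of elements with $t\in a_0\mathbb{Z}$, $x\in\mathbb{Z}$, $(y_1,y_2)=(m_1,m_2)P^t$, $(z_1,z_2)=(n_1,n_2)P^t$, $m_i,n_i\in\mathbb{Z}$, and $X=\Gamma\backslash G$. Left-invariant $1$-forms: $e^1=dt$, $e^2=dx$, $e^3=e^{-t}dy_1-xe^{-t}dz_1$, $e^4=e^{t}dy_2-xe^{t}dz_2$, $e^5=e^{-t}dz_1$, $e^6=e^tdz_2$, with $de^1=de^2=0$, $de^3=-e^{13}-e^{25}$, $de^4=e^{14}-e^{26}$, $de^5=-e^{15}$, $de^6=e^{16}$. The structure. $J$ is the almost-complex structure on $X$ whose $(1,0)$-forms are spanned by $\Phi^1=e^1+ie^2$, $\Phi^2=e^3+ie^4$, $\Phi^3=e^5+ie^6$. *)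

theory Defs
  imports "HOL-Analysis.Analysis" "HOL-Library.Function_Algebras"
begin

section \<open>The Lie group G = R^2 \<ltimes> R^4 in coordinates (t,x,y1,y2,z1,z2)\<close>

type_synonym pt = "real \<times> real \<times> real \<times> real \<times> real \<times> real"

definition gmul :: "pt \<Rightarrow> pt \<Rightarrow> pt" where
  "gmul = (\<lambda>(t,x,y1,y2,z1,z2) (t',x',y1',y2',z1',z2').
     (t + t', x + x', y1' * exp t + x * z1' * exp t + y1,
      y2' * exp (- t) + x * z2' * exp (- t) + y2,
      z1' * exp t + z1, z2' * exp (- t) + z2))"

definition Gamma :: "real \<Rightarrow> real \<Rightarrow> real \<Rightarrow> real \<Rightarrow> real \<Rightarrow> pt set" where
  "Gamma a0 p11 p12 p21 p22 = {(t,x,y1,y2,z1,z2). \<exists>k l m1 m2 n1 n2 :: int.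
      t = a0 * of_int k \<and> x = of_int l \<and>
      y1 = of_int m1 * p11 + of_int m2 * p12 \<and> y2 = of_int m1 * p21 + of_int m2 * p22 \<and>
      z1 = of_int n1 * p11 + of_int n2 * p12 \<and> z2 = of_int n1 * p21 + of_int n2 * p22}"

text \<open>Functions on X = Gamma\G are left-Gamma-invariant functions on G.\<close>
definition Gamma_inv :: "pt set \<Rightarrow> (pt \<Rightarrow> complex) \<Rightarrow> bool" where
  "Gamma_inv \<Gamma> f \<longleftrightarrow> (\<forall>\<gamma>\<in>\<Gamma>. \<forall>g. f (gmul \<gamma> g) = f g)"

definition pdiff :: "pt \<Rightarrow> (pt \<Rightarrow> complex) \<Rightarrow> pt \<Rightarrow> complex" where
  "pdiff v f x = frechet_derivative f (at x) v"

fun iterpd :: "pt list \<Rightarrow> (pt \<Rightarrow> complex) \<Rightarrow> pt \<Rightarrow> complex" where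
  "iterpd [] f = f"
| "iterpd (v # vs) f = pdiff v (iterpd vs f)"

definition smoothfun :: "(pt \<Rightarrow> complex) \<Rightarrow> bool" where
  "smoothfun f \<longleftrightarrow> (\<forall>vs. set vs \<subseteq> Basis \<longrightarrow> (\<forall>x. iterpd vs f differentiable (at x)))"

text \<open>Coordinate unit vectors at the identity (0 is the identity of G); the
  left-invariant coframe e^1..e^6 equals dt,dx,dy1,dy2,dz1,dz2 at the identity,
  so its dual frame is E_k f (g) = d/ds f(g * s u_k) at s = 0.\<close>
definition uvec :: "nat \<Rightarrow> pt" where
  "uvec k = (if k = 1 then 1 else 0, if k = 2 then 1 else 0, if k = 3 then 1 else 0,
             if k = 4 then 1 else 0, if k = 5 then 1 else 0, if k = 6 then 1 else 0)"

definition Efield :: "nat \<Rightarrow> (pt \<Rightarrow> complex) \<Rightarrow> pt \<Rightarrow> complex" where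
  "Efield k f g = vector_derivative (\<lambda>s::real. f (gmul g (s *\<^sub>R uvec k))) (at 0)"

text \<open>A form is given by its coefficient functions: alpha I is the coefficient of
  the monomial Phi^I (wedge in increasing order), where I is a subset of {0..5};
  indices 0,1,2 stand for Phi^1,Phi^2,Phi^3 and 3,4,5 for their conjugates.\<close>
type_synonym form = "nat set \<Rightarrow> pt \<Rightarrow> complex"

definition fzero :: form where "fzero = (\<lambda>I x. 0)"
definition fadd :: "form \<Rightarrow> form \<Rightarrow> form" where "fadd a b = (\<lambda>I x. a I x + b I x)"
definition fsc :: "complex \<Rightarrow> form \<Rightarrow> form" where "fsc c a = (\<lambda>I x. c * a I x)"

definition one :: "nat \<Rightarrow> form" where "one i = (\<lambda>I x. if I = {i} then 1 else 0)"

definition wsgn :: "nat set \<Rightarrow> nat set \<Rightarrow> complex" where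
  "wsgn I J = (-1) ^ card {(i,j). i \<in> I \<and> j \<in> J \<and> j < i}"

definition wedge :: "form \<Rightarrow> form \<Rightarrow> form" where
  "wedge a b = (\<lambda>K x. \<Sum>I\<in>Pow K. wsgn I (K - I) * a I x * b (K - I) x)"

text \<open>Real coframe e^1..e^6 expressed in the complex frame:
  e^{2j-1} = (Phi^j + conj Phi^j)/2, e^{2j} = (Phi^j - conj Phi^j)/(2i).\<close>
definition ereal :: "nat \<Rightarrow> form" where
  "ereal k = (let j = (k + 1) div 2 in
     if odd k then fsc (1/2) (fadd (one (j - 1)) (one (j + 2)))
     else fsc (1 / (2 * \<i>)) (fadd (one (j - 1)) (fsc (-1) (one (j + 2)))))"

definition de :: "nat \<Rightarrow> form" where
  "de k = (if k = 3 then fadd (fsc (-1) (wedge (ereal 1) (ereal 3))) (fsc (-1) (wedge (ereal 2) (ereal 5)))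
     else if k = 4 then fadd (wedge (ereal 1) (ereal 4)) (fsc (-1) (wedge (ereal 2) (ereal 6)))
     else if k = 5 then fsc (-1) (wedge (ereal 1) (ereal 5))
     else if k = 6 then wedge (ereal 1) (ereal 6)
     else fzero)"

text \<open>d Phi^j = de^{2j-1} + i de^{2j}, d conj Phi^j = de^{2j-1} - i de^{2j}.\<close>
definition dPhi :: "nat \<Rightarrow> form" where
  "dPhi i = (if i < 3 then fadd (de (2 * i + 1)) (fsc \<i> (de (2 * i + 2)))
             else fadd (de (2 * (i - 3) + 1)) (fsc (- \<i>) (de (2 * (i - 3) + 2))))"

fun monolist :: "nat list \<Rightarrow> form" where
  "monolist [] = (\<lambda>I x. if I = {} then 1 else 0)"
| "monolist (i # is) = wedge (one i) (monolist is)"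

text \<open>Leibniz rule for d of a monomial.\<close>
fun dlist :: "nat list \<Rightarrow> form" where
  "dlist [] = fzero"
| "dlist (i # is) = fadd (wedge (dPhi i) (monolist is)) (fsc (-1) (wedge (one i) (dlist is)))"

definition mono :: "nat set \<Rightarrow> form" where "mono I = monolist (sorted_list_of_set I)"
definition dmono :: "nat set \<Rightarrow> form" where "dmono I = dlist (sorted_list_of_set I)"

definition dfun :: "(pt \<Rightarrow> complex) \<Rightarrow> form" where
  "dfun f = (\<lambda>K x. \<Sum>k\<in>{1..6}. Efield k f x * ereal k K x)"

definition dform :: "form \<Rightarrow> form" where
  "dform a = (\<lambda>K x. \<Sum>I\<in>Pow {0..5}. wedge (dfun (a I)) (mono I) K x + a I x * dmono I K x)"

definition bideg :: "nat \<Rightarrow> nat \<Rightarrow> nat set \<Rightarrow> bool" where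
  "bideg p q I \<longleftrightarrow> I \<subseteq> {0..5} \<and> card (I \<inter> {0,1,2}) = p \<and> card (I \<inter> {3,4,5}) = q"

definition proj :: "nat \<Rightarrow> nat \<Rightarrow> form \<Rightarrow> form" where
  "proj p q a = (\<lambda>I x. if bideg p q I then a I x else 0)"

definition Apq :: "pt set \<Rightarrow> nat \<Rightarrow> nat \<Rightarrow> form set" where
  "Apq \<Gamma> p q = {a. (\<forall>I. \<not> bideg p q I \<longrightarrow> a I = (\<lambda>x. 0)) \<and>
                     (\<forall>I. smoothfun (a I) \<and> Gamma_inv \<Gamma> (a I))}"

definition dbar :: "nat \<Rightarrow> form \<Rightarrow> form" where "dbar p a = proj p 1 (dform a)"
definition mubar :: "nat \<Rightarrow> form \<Rightarrow> form" where "mubar p a = proj (p - 1) 2 (dform a)"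

definition HDol_p0 :: "pt set \<Rightarrow> nat \<Rightarrow> form set" where
  "HDol_p0 \<Gamma> p = {a \<in> Apq \<Gamma> p 0. dbar p a = fzero \<and> mubar p a = fzero}"

definition hDol_p0 :: "pt set \<Rightarrow> nat \<Rightarrow> nat" where
  "hDol_p0 \<Gamma> p = vector_space.dim fsc (HDol_p0 \<Gamma> p)"

definition Phi1 :: form where "Phi1 = one 0"

end

theory Submission
  imports Defs "HOL-Complex_Analysis.Cauchy_Integral_Formula"
begin


lemma fadd_app[simp]: "fadd a b K x = a K x + b K x" by (simp add: fadd_def)
lemma fsc_app[simp]: "fsc c a K x = c * a K x" by (simp add: fsc_def)
lemma fzero_app[simp]: "fzero K x = 0" by (simp add: fzero_def)
lemma one_app[simp]: "one i K x = (if K = {i} then 1 else 0)" by (simp add: one_def)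

lemma wedge_one_left[simp]:
  assumes "finite K"
  shows "wedge (one i) b K x = (if i \<in> K then (-1) ^ card (K \<inter> {..<i}) * b (K - {i}) x else 0)"
proof -
  have w: "wsgn {i} (K - {i}) = (-1) ^ card (K \<inter> {..<i})"
  proof -
    have "{(a,j). a \<in> {i} \<and> j \<in> K - {i} \<and> j < a} = (\<lambda>j. (i,j)) ` (K \<inter> {..<i})" by auto
    moreover have "card ((\<lambda>j. (i,j)) ` (K \<inter> {..<i})) = card (K \<inter> {..<i})"
      by (rule card_image) (auto simp: inj_on_def)
    ultimately show ?thesis unfolding wsgn_def by simp
  qed
  have "wedge (one i) b K x = (\<Sum>I\<in>Pow K. if I = {i} then wsgn {i} (K - {i}) * b (K - {i}) x else 0)"
    unfolding wedge_def one_def by (rule sum.cong) auto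
  also have "\<dots> = (if i \<in> K then wsgn {i} (K - {i}) * b (K - {i}) x else 0)"
    using assms by (simp add: sum.delta)
  finally show ?thesis using w by simp
qed

lemma wedge_one_right[simp]:
  assumes "finite K"
  shows "wedge a (one j) K x = (if j \<in> K then (-1) ^ card (K \<inter> {j<..}) * a (K - {j}) x else 0)"
proof -
  have w: "wsgn (K - {j}) {j} = (-1) ^ card (K \<inter> {j<..})"
  proof -
    have "{(a,b). a \<in> K - {j} \<and> b \<in> {j} \<and> b < a} = (\<lambda>a. (a,j)) ` (K \<inter> {j<..})" by auto
    moreover have "card ((\<lambda>a. (a,j)) ` (K \<inter> {j<..})) = card (K \<inter> {j<..})"
      by (rule card_image) (auto simp: inj_on_def)
    ultimately show ?thesis unfolding wsgn_def by simp
  qed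
  have "wedge a (one j) K x = (\<Sum>I\<in>Pow K. if I = K - {j} then (if j \<in> K then wsgn (K - {j}) {j} * a (K - {j}) x else 0) else 0)"
    unfolding wedge_def one_def by (rule sum.cong) auto
  also have "\<dots> = (if j \<in> K then wsgn (K - {j}) {j} * a (K - {j}) x else 0)"
    using assms by (simp add: sum.delta)
  finally show ?thesis using w by simp
qed

lemma wedge_unit_right[simp]:
  assumes "finite K"
  shows "wedge a (\<lambda>I x. if I = {} then 1 else 0) K x = a K x"
proof -
  have "wedge a (\<lambda>I x. if I = {} then 1 else 0) K x = (\<Sum>I\<in>Pow K. if I = K then wsgn K {} * a K x else 0)"
    unfolding wedge_def by (rule sum.cong) auto
  also have "\<dots> = a K x" using assms by (simp add: sum.delta wsgn_def)
  finally show ?thesis .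
qed

lemma wedge_fadd_left[simp]: "wedge (fadd a b) c K x = wedge a c K x + wedge b c K x"
  unfolding wedge_def by (simp add: sum.distrib[symmetric] algebra_simps)
lemma wedge_fadd_right[simp]: "wedge c (fadd a b) K x = wedge c a K x + wedge c b K x"
  unfolding wedge_def by (simp add: sum.distrib[symmetric] algebra_simps)
lemma wedge_fsc_left[simp]: "wedge (fsc k a) c K x = k * wedge a c K x"
  unfolding wedge_def by (simp add: sum_distrib_left algebra_simps)
lemma wedge_fsc_right[simp]: "wedge c (fsc k a) K x = k * wedge c a K x"
  unfolding wedge_def by (simp add: sum_distrib_left algebra_simps)
lemma wedge_fzero_right[simp]: "wedge c fzero K x = 0"
  unfolding wedge_def by simp
lemma wedge_fzero_left[simp]: "wedge fzero c K x = 0"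
  unfolding wedge_def by simp

lemma "sorted_list_of_set {0::nat,1} = [0,1]" by simp
lemma "sorted_list_of_set {0::nat,1,2} = [0,1,2]" by simp

lemma "dmono {1} {3,4} x = -1/2"
  by (simp add: dmono_def dPhi_def de_def ereal_def Let_def insert_Diff_if)

lemma "dmono {0,1} {0,3,4} x = 1/2"
  by (simp add: dmono_def dPhi_def de_def ereal_def Let_def insert_Diff_if)



lemma vs: "vector_space fsc"
  by unfold_locales (auto simp: fsc_def fun_eq_iff algebra_simps)


lemma dfun_zero: "dfun (\<lambda>x. 0) = fzero"
  by (simp add: dfun_def Efield_def fzero_def fun_eq_iff)

lemma wedge_vanish: "(\<And>J. J \<subseteq> K \<Longrightarrow> b J x = 0) \<Longrightarrow> wedge a b K x = 0"
  unfolding wedge_def by (rule sum.neutral) auto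

lemma monolist_support: "monolist is J x \<noteq> 0 \<Longrightarrow> J = set is"
proof (induction "is" arbitrary: J)
  case Nil then show ?case by (auto split: if_splits)
next
  case (Cons i "is")
  have fin: "finite J"
  proof (rule ccontr)
    assume "infinite J"
    then have "monolist (i # is) J x = 0" by (simp add: wedge_def)
    with Cons.prems show False by simp
  qed
  from Cons.prems fin have "i \<in> J" "monolist is (J - {i}) x \<noteq> 0"
    by (auto split: if_splits)
  with Cons.IH[of "J - {i}"] show ?case by auto
qed

lemma mono_support: "finite I \<Longrightarrow> mono I J x \<noteq> 0 \<Longrightarrow> J = I"
  unfolding mono_def using monolist_support by fastforce

lemma wedge_mono_vanish: "finite I \<Longrightarrow> \<not> I \<subseteq> K \<Longrightarrow> wedge a (mono I) K x = 0"
  by (rule wedge_vanish) (use mono_support in blast)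

lemma monolist_single[simp]: "wedge (one i) (\<lambda>I x. if I = {} then 1 else 0) = one i"
proof (intro ext)
  fix K x show "wedge (one i) (\<lambda>I x. if I = {} then 1 else 0) K x = one i K x"
  proof (cases "finite K")
    case True then show ?thesis by auto
  next
    case False then show ?thesis by (auto simp: wedge_def)
  qed
qed

lemma mono_single: "mono {i} = one i"
proof (intro ext)
  fix K x show "mono {i} K x = one i K x"
  proof (cases "finite K")
    case True then show ?thesis by (auto simp: mono_def)
  next
    case False then show ?thesis by (auto simp: mono_def wedge_def)
  qed
qed

lemma bideg0_iff: "bideg p 0 I \<longleftrightarrow> I \<subseteq> {0,1,2} \<and> card I = p"
proof
  assume h: "bideg p 0 I"
  then have fin: "finite I" unfolding bideg_def by (auto intro: finite_subset)
  have "I \<inter> {3,4,5} = {}" using h fin unfolding bideg_def by auto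
  moreover have "I \<subseteq> {0..5}" using h unfolding bideg_def by auto
  ultimately have s: "I \<subseteq> {0,1,2}"
  proof (intro subsetI)
    fix y assume "y \<in> I" "I \<inter> {3,4,5} = {}" "I \<subseteq> {0..5}"
    then have "y \<le> 5" "y \<noteq> 3" "y \<noteq> 4" "y \<noteq> 5" by auto
    then show "y \<in> {0,1,2}" by auto
  qed
  then have "I \<inter> {0,1,2} = I" by auto
  with h s show "I \<subseteq> {0,1,2} \<and> card I = p" unfolding bideg_def by auto
next
  assume h: "I \<subseteq> {0,1,2} \<and> card I = p"
  then have "I \<inter> {0,1,2} = I" "I \<inter> {3,4,5} = {}" by auto
  with h show "bideg p 0 I" unfolding bideg_def by auto
qed

lemma dform_reduce:
  assumes a: "a \<in> Apq \<Gamma> p 0"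
  shows "dform a K x = (\<Sum>I\<in>{I. I \<subseteq> {0,1,2::nat} \<and> card I = p}. wedge (dfun (a I)) (mono I) K x + a I x * dmono I K x)"
  unfolding dform_def
proof (rule sum.mono_neutral_right)
  show "finite (Pow {0..5::nat})" by simp
  show "{I. I \<subseteq> {0, 1, 2::nat} \<and> card I = p} \<subseteq> Pow {0..5}" by auto
  show "\<forall>I\<in>Pow {0..5} - {I. I \<subseteq> {0, 1, 2::nat} \<and> card I = p}.
       wedge (dfun (a I)) (mono I) K x + a I x * dmono I K x = 0"
  proof
    fix I assume "I \<in> Pow {0..5} - {I. I \<subseteq> {0, 1, 2::nat} \<and> card I = p}"
    then have "\<not> bideg p 0 I" by (simp add: bideg0_iff)
    with a have "a I = (\<lambda>x. 0)" by (auto simp: Apq_def)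
    then show "wedge (dfun (a I)) (mono I) K x + a I x * dmono I K x = 0"
      by (simp add: dfun_zero)
  qed
qed

lemma S1: "{I. I \<subseteq> {0,1,2::nat} \<and> card I = 1} = {{0},{1},{2}}"
  by (auto simp: card_1_singleton_iff)
lemma S2: "{I. I \<subseteq> {0,1,2::nat} \<and> card I = 2} = {{0,1},{0,2},{1,2}}"
proof -
  have "I \<subseteq> {0,1,2::nat} \<and> card I = 2 \<longleftrightarrow> I = {0,1} \<or> I = {0,2} \<or> I = {1,2}" for I
  proof
    assume h: "I \<subseteq> {0,1,2::nat} \<and> card I = 2"
    then obtain u v where uv: "I = {u,v}" "u \<noteq> v" by (auto simp: card_2_iff)
    with h have "u \<in> {0,1,2}" "v \<in> {0,1,2}" by auto
    with uv show "I = {0,1} \<or> I = {0,2} \<or> I = {1,2}" by (auto simp: insert_commute)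
  qed auto
  then show ?thesis by auto
qed
lemma S3: "{I. I \<subseteq> {0,1,2::nat} \<and> card I = 3} = {{0,1,2}}"
proof -
  have "I \<subseteq> {0,1,2::nat} \<and> card I = 3 \<longleftrightarrow> I = {0,1,2}" for I
    using card_subset_eq[of "{0,1,2::nat}" I] by auto
  then show ?thesis by auto
qed

lemmas evalsimps = dmono_def dPhi_def de_def ereal_def Let_def insert_Diff_if




lemma HDol2_zero: "HDol_p0 \<Gamma> 2 \<subseteq> {fzero}"
proof
  fix a assume "a \<in> HDol_p0 \<Gamma> 2"
  then have A: "a \<in> Apq \<Gamma> 2 0" and mb: "mubar 2 a = fzero" by (auto simp: HDol_p0_def)
  have D: "dform a K x = wedge (dfun (a {0,1})) (mono {0,1}) K x + a {0,1} x * dmono {0,1} K x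
     + (wedge (dfun (a {0,2})) (mono {0,2}) K x + a {0,2} x * dmono {0,2} K x)
     + (wedge (dfun (a {1,2})) (mono {1,2}) K x + a {1,2} x * dmono {1,2} K x)" for K x
    using dform_reduce[OF A, of K x, unfolded S2] by (simp add: doubleton_eq_iff algebra_simps)
  have z: "dform a K x = 0" if "bideg 1 2 K" for K x
    using fun_cong[OF fun_cong[OF mb, of K], of x] that by (simp add: mubar_def proj_def)
  have b1: "bideg 1 2 {0,3,4}" "bideg 1 2 {0,3,5}" "bideg 1 2 {2,3,4}"
    by (simp_all add: bideg_def)
  have 1: "a {0,1} x = 0" for x
    using z[OF b1(1), of x] by (simp add: D wedge_mono_vanish evalsimps)
  have 2: "a {0,2} x = 0" for x
    using z[OF b1(2), of x] by (simp add: D wedge_mono_vanish evalsimps 1)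
  have 3: "a {1,2} x = 0" for x
    using z[OF b1(3), of x] by (simp add: D wedge_mono_vanish evalsimps 1 2)
  have "a I x = 0" for I x
  proof (cases "bideg 2 0 I")
    case True
    then have "I \<in> {I. I \<subseteq> {0,1,2::nat} \<and> card I = 2}" by (simp add: bideg0_iff)
    then have "I = {0,1} \<or> I = {0,2} \<or> I = {1,2}" unfolding S2 by simp
    then show ?thesis using 1 2 3 by (elim disjE) simp_all
  next
    case False with A show ?thesis by (auto simp: Apq_def)
  qed
  then show "a \<in> {fzero}" by (auto simp: fzero_def fun_eq_iff)
qed

lemma HDol3_zero: "HDol_p0 \<Gamma> 3 \<subseteq> {fzero}"
proof
  fix a assume "a \<in> HDol_p0 \<Gamma> 3"
  then have A: "a \<in> Apq \<Gamma> 3 0" and mb: "mubar 3 a = fzero" by (auto simp: HDol_p0_def)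
  have D: "dform a K x = wedge (dfun (a {0,1,2})) (mono {0,1,2}) K x + a {0,1,2} x * dmono {0,1,2} K x" for K x
    using dform_reduce[OF A, of K x, unfolded S3] by simp
  have z: "dform a K x = 0" if "bideg 2 2 K" for K x
    using fun_cong[OF fun_cong[OF mb, of K], of x] that by (simp add: mubar_def proj_def)
  have b1: "bideg 2 2 {0,2,3,4}"
    by (simp_all add: bideg_def)
  have 1: "a {0,1,2} x = 0" for x
    using z[OF b1(1), of x] by (simp add: D wedge_mono_vanish evalsimps)
  have "a I x = 0" for I x
  proof (cases "bideg 3 0 I")
    case True
    then have "I \<in> {I. I \<subseteq> {0,1,2::nat} \<and> card I = 3}" by (simp add: bideg0_iff)
    then have "I = {0,1,2}" unfolding S3 by simp
    then show ?thesis using 1 by simp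
  next
    case False with A show ?thesis by (auto simp: Apq_def)
  qed
  then show "a \<in> {fzero}" by (auto simp: fzero_def fun_eq_iff)
qed



lemma negfix: "- x = y * \<i> \<Longrightarrow> x + \<i> * y = (0::complex)"
proof -
  assume "- x = y * \<i>"
  then have "x = - (\<i> * y)" by (metis minus_minus mult.commute)
  then show ?thesis by simp
qed

lemma six: "{1..6::nat} = {1,2,3,4,5,6}" by auto
lemma dfun_expand: "dfun f K x = Efield 1 f x * ereal 1 K x + Efield 2 f x * ereal 2 K x + Efield 3 f x * ereal 3 K x
  + Efield 4 f x * ereal 4 K x + Efield 5 f x * ereal 5 K x + Efield 6 f x * ereal 6 K x"
  unfolding dfun_def six by (simp add: algebra_simps)

lemma HDol1_alg:
  assumes "a \<in> HDol_p0 \<Gamma> 1"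
  shows "(\<forall>x. a {1} x = 0) \<and> (\<forall>x. a {2} x = 0) \<and>
    (\<forall>g. Efield 1 (a {0}) g + \<i> * Efield 2 (a {0}) g = 0) \<and>
    (\<forall>g. Efield 3 (a {0}) g + \<i> * Efield 4 (a {0}) g = 0) \<and>
    (\<forall>g. Efield 5 (a {0}) g + \<i> * Efield 6 (a {0}) g = 0)"
proof -
  from assms have A: "a \<in> Apq \<Gamma> 1 0" and mb: "mubar 1 a = fzero" and db: "dbar 1 a = fzero"
    by (auto simp: HDol_p0_def)
  have D: "dform a K x = wedge (dfun (a {0})) (one 0) K x + a {0} x * dmono {0} K x
     + (wedge (dfun (a {1})) (one 1) K x + a {1} x * dmono {1} K x)
     + (wedge (dfun (a {2})) (one 2) K x + a {2} x * dmono {2} K x)" for K x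
    using dform_reduce[OF A, of K x, unfolded S1] by (simp add: algebra_simps mono_single)
  have z: "dform a K x = 0" if "bideg 0 2 K" for K x
    using fun_cong[OF fun_cong[OF mb, of K], of x] that by (simp add: mubar_def proj_def)
  have z2: "dform a K x = 0" if "bideg 1 1 K" for K x
    using fun_cong[OF fun_cong[OF db, of K], of x] that by (simp add: dbar_def proj_def)
  have b1: "bideg 0 2 {3,4}" "bideg 0 2 {3,5}" "bideg 1 1 {0,3}" "bideg 1 1 {0,4}" "bideg 1 1 {0,5}"
    by (simp_all add: bideg_def)
  have 1: "a {1} x = 0" for x
    using z[OF b1(1), of x] by (simp add: D evalsimps)
  have one1: "a {Suc 0} x = 0" for x using 1 by simp
  have 2: "a {2} x = 0" for x
    using z[OF b1(2), of x] by (simp add: D evalsimps 1 one1)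
  have 3: "Efield 1 (a {0}) g + \<i> * Efield 2 (a {0}) g = 0" for g
    using z2[OF b1(3), of g] by (intro negfix) (simp add: D evalsimps 1 one1 2 dfun_expand)
  have 4: "Efield 3 (a {0}) g + \<i> * Efield 4 (a {0}) g = 0" for g
    using z2[OF b1(4), of g] by (intro negfix) (simp add: D evalsimps 1 one1 2 dfun_expand)
  have 5: "Efield 5 (a {0}) g + \<i> * Efield 6 (a {0}) g = 0" for g
    using z2[OF b1(5), of g] by (intro negfix) (simp add: D evalsimps 1 one1 2 dfun_expand)
  show ?thesis using 1 2 3 4 5 by blast
qed



lemma gmul_scale: "gmul g (s *\<^sub>R h) = g + s *\<^sub>R (gmul g h - g)"
proof -
  obtain t x y1 y2 z1 z2 where g: "g = (t,x,y1,y2,z1,z2)" by (cases g) auto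
  obtain t' x' y1' y2' z1' z2' where h: "h = (t',x',y1',y2',z1',z2')" by (cases h) auto
  show ?thesis unfolding g h by (simp add: gmul_def algebra_simps)
qed

lemma vd_line:
  assumes "f differentiable (at g)"
  shows "vector_derivative (\<lambda>s::real. f (g + s *\<^sub>R d)) (at 0) = frechet_derivative f (at g) d"
proof -
  let ?D = "frechet_derivative f (at g)"
  have fD: "(f has_derivative ?D) (at g)" using assms frechet_derivative_works by blast
  have lin: "linear ?D" using has_derivative_linear[OF fD] .
  have c: "((\<lambda>s::real. g + s *\<^sub>R d) has_derivative (\<lambda>s. s *\<^sub>R d)) (at 0)"
    by (auto intro!: derivative_eq_intros)
  have fD': "(f has_derivative ?D) (at ((\<lambda>s::real. g + s *\<^sub>R d) 0))" using fD by simp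
  have "((f \<circ> (\<lambda>s::real. g + s *\<^sub>R d)) has_derivative (?D \<circ> (\<lambda>s. s *\<^sub>R d))) (at 0)"
    by (rule diff_chain_at[OF c fD'])
  moreover have "?D \<circ> (\<lambda>s. s *\<^sub>R d) = (\<lambda>s. s *\<^sub>R ?D d)"
    using lin by (auto simp: linear_scale o_def)
  ultimately have "((\<lambda>s. f (g + s *\<^sub>R d)) has_vector_derivative ?D d) (at 0)"
    by (simp add: has_vector_derivative_def o_def)
  then show ?thesis by (rule vector_derivative_at)
qed

lemma Efield_eq:
  assumes "f differentiable (at g)"
  shows "Efield k f g = frechet_derivative f (at g) (gmul g (uvec k) - g)"
  unfolding Efield_def gmul_scale using vd_line[OF assms] .

lemma dirs:
  "gmul (t,x,y1,y2,z1,z2) (uvec 1) - (t,x,y1,y2,z1,z2) = (1,0,0,0,0,0)"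
  "gmul (t,x,y1,y2,z1,z2) (uvec 2) - (t,x,y1,y2,z1,z2) = (0,1,0,0,0,0)"
  "gmul (t,x,y1,y2,z1,z2) (uvec 3) - (t,x,y1,y2,z1,z2) = (0,0,exp t,0,0,0)"
  "gmul (t,x,y1,y2,z1,z2) (uvec 4) - (t,x,y1,y2,z1,z2) = (0,0,0,exp (-t),0,0)"
  "gmul (t,x,y1,y2,z1,z2) (uvec 5) - (t,x,y1,y2,z1,z2) = (0,0,x * exp t,0,exp t,0)"
  "gmul (t,x,y1,y2,z1,z2) (uvec 6) - (t,x,y1,y2,z1,z2) = (0,0,0,x * exp (-t),0,exp (-t))"
  by (simp_all add: gmul_def uvec_def zero_prod_def)

lemma hol_plane:
  fixes f :: "pt \<Rightarrow> complex" and p u v :: pt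
  assumes diff: "\<And>q. f differentiable (at q)"
    and CR: "\<And>w. frechet_derivative f (at (p + Re w *\<^sub>R u + Im w *\<^sub>R v)) u
              + \<i> * frechet_derivative f (at (p + Re w *\<^sub>R u + Im w *\<^sub>R v)) v = 0"
  shows "(\<lambda>w. f (p + Re w *\<^sub>R u + Im w *\<^sub>R v)) holomorphic_on UNIV"
proof -
  have "(\<lambda>w. f (p + Re w *\<^sub>R u + Im w *\<^sub>R v)) field_differentiable (at w)" for w
  proof -
    let ?A = "\<lambda>w. p + Re w *\<^sub>R u + Im w *\<^sub>R v"
    let ?D = "frechet_derivative f (at (?A w))"
    have fD: "(f has_derivative ?D) (at (?A w))" using diff frechet_derivative_works by blast
    have lin: "linear ?D" using has_derivative_linear[OF fD] .
    have c: "(?A has_derivative (\<lambda>h. Re h *\<^sub>R u + Im h *\<^sub>R v)) (at w)"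
      by (auto intro!: derivative_eq_intros)
    have "((f \<circ> ?A) has_derivative (?D \<circ> (\<lambda>h. Re h *\<^sub>R u + Im h *\<^sub>R v))) (at w)"
      by (rule diff_chain_at[OF c fD])
    moreover have "?D \<circ> (\<lambda>h. Re h *\<^sub>R u + Im h *\<^sub>R v) = (\<lambda>h. ?D u * h)"
    proof
      fix h
      have v: "?D v = \<i> * ?D u"
      proof -
        have "?D u + \<i> * ?D v = 0" using CR[of w] .
        then have "\<i> * (?D u + \<i> * ?D v) = 0" by simp
        then show ?thesis by (simp add: algebra_simps)
      qed
      have "(?D \<circ> (\<lambda>h. Re h *\<^sub>R u + Im h *\<^sub>R v)) h = Re h *\<^sub>R ?D u + Im h *\<^sub>R ?D v"
        using lin by (simp add: linear_add linear_scale)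
      also have "\<dots> = Re h *\<^sub>R ?D u + Im h *\<^sub>R (\<i> * ?D u)"
        by (simp only: v)
      also have "\<dots> = ?D u * (complex_of_real (Re h) + \<i> * complex_of_real (Im h))"
        by (simp add: scaleR_conv_of_real algebra_simps)
      also have "complex_of_real (Re h) + \<i> * complex_of_real (Im h) = h"
        by (simp add: complex_eq_iff)
      finally show "(?D \<circ> (\<lambda>h. Re h *\<^sub>R u + Im h *\<^sub>R v)) h = ?D u * h" .
    qed
    ultimately have "((\<lambda>w. f (?A w)) has_field_derivative ?D u) (at w)"
      by (simp add: has_field_derivative_def o_def)
    then show ?thesis unfolding field_differentiable_def by blast
  qed
  then show ?thesis
    by (simp add: holomorphic_on_def field_differentiable_at_within)
qed

lemma const_plane:
  fixes f :: "pt \<Rightarrow> complex" and p u v :: pt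
  assumes diff: "\<And>q. f differentiable (at q)"
    and CR: "\<And>w. frechet_derivative f (at (p + Re w *\<^sub>R u + Im w *\<^sub>R v)) u
              + \<i> * frechet_derivative f (at (p + Re w *\<^sub>R u + Im w *\<^sub>R v)) v = 0"
    and B: "\<And>w. norm (f (p + Re w *\<^sub>R u + Im w *\<^sub>R v)) \<le> B"
  shows "f (p + Re w *\<^sub>R u + Im w *\<^sub>R v) = f p"
proof -
  have "(\<lambda>w. f (p + Re w *\<^sub>R u + Im w *\<^sub>R v)) constant_on UNIV"
  proof (rule Liouville_theorem[OF hol_plane[OF diff CR]])
    show "bounded (range (\<lambda>w. f (p + Re w *\<^sub>R u + Im w *\<^sub>R v)))"
      using B by (auto simp: bounded_iff)
  qed
  then obtain c where "\<And>w. f (p + Re w *\<^sub>R u + Im w *\<^sub>R v) = c"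
    by (auto simp: constant_on_def)
  from this[of w] this[of 0] show ?thesis by simp
qed




lemma lattice_bounded:
  fixes \<phi> :: "real \<times> real \<Rightarrow> complex"
  assumes cont: "continuous_on UNIV \<phi>"
    and det: "q11 * q22 - q12 * q21 \<noteq> 0"
    and per: "\<And>m1 m2 :: int. \<And>y1 y2. \<phi> (y1 + of_int m1 * q11 + of_int m2 * q12, y2 + of_int m1 * q21 + of_int m2 * q22) = \<phi> (y1, y2)"
  shows "\<exists>B. \<forall>y1 y2. norm (\<phi> (y1,y2)) \<le> B"
proof -
  define L where "L = (\<lambda>s::real\<times>real. (fst s * q11 + snd s * q12, fst s * q21 + snd s * q22))"
  have cL: "continuous_on UNIV L" unfolding L_def by (intro continuous_intros)
  have "compact (\<phi> ` L ` cbox (0,0) (1,1))"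
    by (intro compact_continuous_image compact_cbox continuous_on_subset[OF cont] continuous_on_subset[OF cL]) auto
  then obtain B where B: "\<And>z. z \<in> \<phi> ` L ` cbox (0,0) (1,1) \<Longrightarrow> norm z \<le> B"
    using compact_imp_bounded bounded_iff by metis
  have "norm (\<phi> (y1,y2)) \<le> B" for y1 y2
  proof -
    define d where "d = q11 * q22 - q12 * q21"
    define c1 where "c1 = (q22 * y1 - q12 * y2) / d"
    define c2 where "c2 = (q11 * y2 - q21 * y1) / d"
    define m1 where "m1 = floor c1"
    define m2 where "m2 = floor c2"
    have dn: "d \<noteq> 0" using det d_def by simp
    have "c1 * q11 + c2 * q12 = ((q22 * y1 - q12 * y2) * q11 + (q11 * y2 - q21 * y1) * q12) / d"
      unfolding c1_def c2_def by (simp add: add_divide_distrib)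
    also have "(q22 * y1 - q12 * y2) * q11 + (q11 * y2 - q21 * y1) * q12 = y1 * d"
      unfolding d_def by (simp add: algebra_simps)
    finally have e1: "c1 * q11 + c2 * q12 = y1" using dn by simp
    have "c1 * q21 + c2 * q22 = ((q22 * y1 - q12 * y2) * q21 + (q11 * y2 - q21 * y1) * q22) / d"
      unfolding c1_def c2_def by (simp add: add_divide_distrib)
    also have "(q22 * y1 - q12 * y2) * q21 + (q11 * y2 - q21 * y1) * q22 = y2 * d"
      unfolding d_def by (simp add: algebra_simps)
    finally have e2: "c1 * q21 + c2 * q22 = y2" using dn by simp
    define s where "s = (c1 - of_int m1, c2 - of_int m2)"
    have f1: "0 \<le> c1 - of_int m1" "c1 - of_int m1 \<le> 1"
      using floor_correct[of c1] unfolding m1_def by linarith+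
    have f2: "0 \<le> c2 - of_int m2" "c2 - of_int m2 \<le> 1"
      using floor_correct[of c2] unfolding m2_def by linarith+
    have s: "s \<in> cbox (0,0) (1,1)"
      unfolding s_def using f1 f2 by (simp add: cbox_Pair_eq)
    have Ls: "L s = (y1 + of_int (- m1) * q11 + of_int (- m2) * q12, y2 + of_int (- m1) * q21 + of_int (- m2) * q22)"
      unfolding L_def s_def using e1 e2 by (auto simp: algebra_simps)
    have "\<phi> (L s) = \<phi> (y1, y2)" unfolding Ls by (rule per)
    moreover have "\<phi> (L s) \<in> \<phi> ` L ` cbox (0,0) (1,1)" using s by blast
    ultimately show ?thesis using B by metis
  qed
  then show ?thesis by blast
qed




lemma Gamma_mem: "(a0 * of_int k, of_int l, of_int m1 * p11 + of_int m2 * p12, of_int m1 * p21 + of_int m2 * p22,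
   of_int n1 * p11 + of_int n2 * p12, of_int n1 * p21 + of_int n2 * p22) \<in> Gamma a0 p11 p12 p21 p22"
proof -
  have "\<exists>k' l' m1' m2' n1' n2' :: int. a0 * of_int k = a0 * of_int k' \<and> of_int l = (of_int l' :: real) \<and>
      of_int m1 * p11 + of_int m2 * p12 = of_int m1' * p11 + of_int m2' * p12 \<and>
      of_int m1 * p21 + of_int m2 * p22 = of_int m1' * p21 + of_int m2' * p22 \<and>
      of_int n1 * p11 + of_int n2 * p12 = of_int n1' * p11 + of_int n2' * p12 \<and>
      of_int n1 * p21 + of_int n2 * p22 = of_int n1' * p21 + of_int n2' * p22"
    by (rule exI[of _ k], rule exI[of _ l], rule exI[of _ m1], rule exI[of _ m2], rule exI[of _ n1], rule exI[of _ n2]) simp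
  then show ?thesis unfolding Gamma_def by simp
qed

lemma expcancel: "y * exp (- t) * exp t = (y::real)" "y * exp t * exp (- t) = (y::real)"
  by (simp_all add: mult.assoc exp_minus_inverse mult.commute[of "exp (-t)"])

lemma f_const:
  fixes f :: "pt \<Rightarrow> complex"
  assumes diff: "\<And>q. f differentiable (at q)"
    and inv: "Gamma_inv (Gamma a0 p11 p12 p21 p22) f"
    and a0: "a0 > 0" and det: "p11 * p22 - p12 * p21 \<noteq> 0"
    and E12: "\<And>g. Efield 1 f g + \<i> * Efield 2 f g = 0"
    and E34: "\<And>g. Efield 3 f g + \<i> * Efield 4 f g = 0"
    and E56: "\<And>g. Efield 5 f g + \<i> * Efield 6 f g = 0"
  shows "f g = f 0"
proof -
  have cf: "continuous_on UNIV f"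
    using diff by (intro differentiable_imp_continuous_on differentiable_at_imp_differentiable_on) auto
  have finv: "f (gmul \<gamma> g) = f g" if "\<gamma> \<in> Gamma a0 p11 p12 p21 p22" for \<gamma> g
    using inv that unfolding Gamma_inv_def by blast
  have S1: "f (t,x,y1,y2,z1,z2) = f (t,x,0,0,z1,z2)" for t x y1 y2 z1 z2
  proof -
    define p :: pt where "p = (t,x,0,0,z1,z2)"
    define u :: pt where "u = (0,0,exp t,0,0,0)"
    define v :: pt where "v = (0,0,0,exp (-t),0,0)"
    have Aw: "p + Re w *\<^sub>R u + Im w *\<^sub>R v = (t, x, Re w * exp t, Im w * exp (-t), z1, z2)" for w
      unfolding p_def u_def v_def by simp
    have CR: "frechet_derivative f (at (p + Re w *\<^sub>R u + Im w *\<^sub>R v)) u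
              + \<i> * frechet_derivative f (at (p + Re w *\<^sub>R u + Im w *\<^sub>R v)) v = 0" for w
      using E34[of "(t, x, Re w * exp t, Im w * exp (-t), z1, z2)"]
      unfolding Aw Efield_eq[OF diff] dirs by (simp add: u_def v_def)
    define \<phi> where "\<phi> = (\<lambda>y::real\<times>real. f (t,x,fst y,snd y,z1,z2))"
    have "\<exists>B. \<forall>y1 y2. norm (\<phi> (y1,y2)) \<le> B"
    proof (rule lattice_bounded[OF _ det])
      show "continuous_on UNIV \<phi>" unfolding \<phi>_def
        by (rule continuous_on_compose2[OF cf]) (auto intro!: continuous_intros)
      fix m1 m2 :: int and y1 y2
      have e: "gmul (0,0,of_int m1 * p11 + of_int m2 * p12, of_int m1 * p21 + of_int m2 * p22, 0, 0) (t,x,y1,y2,z1,z2)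
        = (t, x, y1 + of_int m1 * p11 + of_int m2 * p12, y2 + of_int m1 * p21 + of_int m2 * p22, z1, z2)"
        by (simp add: gmul_def algebra_simps)
      have m: "(0,0,of_int m1 * p11 + of_int m2 * p12, of_int m1 * p21 + of_int m2 * p22, 0, 0) \<in> Gamma a0 p11 p12 p21 p22"
        using Gamma_mem[of a0 0 0 m1 p11 m2 p12 p21 p22 0 0] by simp
      show "\<phi> (y1 + of_int m1 * p11 + of_int m2 * p12, y2 + of_int m1 * p21 + of_int m2 * p22) = \<phi> (y1, y2)"
        using finv[OF m, of "(t,x,y1,y2,z1,z2)"] unfolding e \<phi>_def by simp
    qed
    then obtain B where B: "\<And>y1 y2. norm (\<phi> (y1,y2)) \<le> B" by blast
    have Bw: "norm (f (p + Re w *\<^sub>R u + Im w *\<^sub>R v)) \<le> B" for w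
      using B[of "Re w * exp t" "Im w * exp (-t)"] unfolding Aw \<phi>_def by simp
    have "f (p + Re (Complex (y1 * exp (-t)) (y2 * exp t)) *\<^sub>R u + Im (Complex (y1 * exp (-t)) (y2 * exp t)) *\<^sub>R v) = f p"
      by (rule const_plane[OF diff CR Bw])
    then show ?thesis unfolding Aw by (simp add: expcancel p_def)
  qed
  have S2: "f (t,x,0,0,z1,z2) = f (t,x,0,0,0,0)" for t x z1 z2
  proof -
    define p :: pt where "p = (t,x,0,0,0,0)"
    define u :: pt where "u = (0,0,x * exp t,0,exp t,0)"
    define v :: pt where "v = (0,0,0,x * exp (-t),0,exp (-t))"
    have Aw: "p + Re w *\<^sub>R u + Im w *\<^sub>R v = (t, x, Re w * (x * exp t), Im w * (x * exp (-t)), Re w * exp t, Im w * exp (-t))" for w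
      unfolding p_def u_def v_def by simp
    have CR: "frechet_derivative f (at (p + Re w *\<^sub>R u + Im w *\<^sub>R v)) u
              + \<i> * frechet_derivative f (at (p + Re w *\<^sub>R u + Im w *\<^sub>R v)) v = 0" for w
      using E56[of "(t, x, Re w * (x * exp t), Im w * (x * exp (-t)), Re w * exp t, Im w * exp (-t))"]
      unfolding Aw Efield_eq[OF diff] dirs by (simp add: u_def v_def)
    define \<phi> where "\<phi> = (\<lambda>y::real\<times>real. f (t,x,0,0,fst y,snd y))"
    have "\<exists>B. \<forall>y1 y2. norm (\<phi> (y1,y2)) \<le> B"
    proof (rule lattice_bounded[OF _ det])
      show "continuous_on UNIV \<phi>" unfolding \<phi>_def
        by (rule continuous_on_compose2[OF cf]) (auto intro!: continuous_intros)
      fix m1 m2 :: int and y1 y2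
      have e: "gmul (0,0,0,0,of_int m1 * p11 + of_int m2 * p12, of_int m1 * p21 + of_int m2 * p22) (t,x,0,0,y1,y2)
        = (t, x, 0, 0, y1 + of_int m1 * p11 + of_int m2 * p12, y2 + of_int m1 * p21 + of_int m2 * p22)"
        by (simp add: gmul_def algebra_simps)
      have m: "(0,0,0,0,of_int m1 * p11 + of_int m2 * p12, of_int m1 * p21 + of_int m2 * p22) \<in> Gamma a0 p11 p12 p21 p22"
        using Gamma_mem[of a0 0 0 0 p11 0 p12 p21 p22 m1 m2] by simp
      show "\<phi> (y1 + of_int m1 * p11 + of_int m2 * p12, y2 + of_int m1 * p21 + of_int m2 * p22) = \<phi> (y1, y2)"
        using finv[OF m, of "(t,x,0,0,y1,y2)"] unfolding e \<phi>_def by simp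
    qed
    then obtain B where B: "\<And>y1 y2. norm (\<phi> (y1,y2)) \<le> B" by blast
    have Bw: "norm (f (p + Re w *\<^sub>R u + Im w *\<^sub>R v)) \<le> B" for w
      using B[of "Re w * exp t" "Im w * exp (-t)"] S1[of t x "Re w * (x * exp t)" "Im w * (x * exp (-t))" "Re w * exp t" "Im w * exp (-t)"]
      unfolding Aw \<phi>_def by simp
    have "f (p + Re (Complex (z1 * exp (-t)) (z2 * exp t)) *\<^sub>R u + Im (Complex (z1 * exp (-t)) (z2 * exp t)) *\<^sub>R v) = f p"
      by (rule const_plane[OF diff CR Bw])
    then have "f (t, x, x * z1, x * z2, z1, z2) = f p" unfolding Aw by (simp add: expcancel mult.commute mult.left_commute exp_minus_inverse)
    then show ?thesis using S1[of t x "x * z1" "x * z2" z1 z2] by (simp add: p_def)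
  qed
  have S3: "f (t,x,0,0,0,0) = f (0,0,0,0,0,0)" for t x
  proof -
    define p :: pt where "p = (0,0,0,0,0,0)"
    define u :: pt where "u = (1,0,0,0,0,0)"
    define v :: pt where "v = (0,1,0,0,0,0)"
    have Aw: "p + Re w *\<^sub>R u + Im w *\<^sub>R v = (Re w, Im w, 0, 0, 0, 0)" for w
      unfolding p_def u_def v_def by simp
    have CR: "frechet_derivative f (at (p + Re w *\<^sub>R u + Im w *\<^sub>R v)) u
              + \<i> * frechet_derivative f (at (p + Re w *\<^sub>R u + Im w *\<^sub>R v)) v = 0" for w
      using E12[of "(Re w, Im w, 0, 0, 0, 0)"]
      unfolding Aw Efield_eq[OF diff] dirs by (simp add: u_def v_def)
    define \<phi> where "\<phi> = (\<lambda>y::real\<times>real. f (fst y,snd y,0,0,0,0))"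
    have "\<exists>B. \<forall>y1 y2. norm (\<phi> (y1,y2)) \<le> B"
    proof (rule lattice_bounded[of _ a0 1 0 0])
      show "continuous_on UNIV \<phi>" unfolding \<phi>_def
        by (rule continuous_on_compose2[OF cf]) (auto intro!: continuous_intros)
      show "a0 * 1 - 0 * 0 \<noteq> 0" using a0 by simp
      fix m1 m2 :: int and y1 y2
      have e: "gmul (a0 * of_int m1, of_int m2, 0,0,0,0) (y1,y2,0,0,0,0)
        = (y1 + of_int m1 * a0 + of_int m2 * 0, y2 + of_int m1 * 0 + of_int m2 * 1, 0, 0, 0, 0)"
        by (simp add: gmul_def algebra_simps)
      have m: "(a0 * of_int m1, of_int m2, 0,0,0,0) \<in> Gamma a0 p11 p12 p21 p22"
        using Gamma_mem[of a0 m1 m2 0 p11 0 p12 p21 p22 0 0] by simp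
      show "\<phi> (y1 + of_int m1 * a0 + of_int m2 * 0, y2 + of_int m1 * 0 + of_int m2 * 1) = \<phi> (y1, y2)"
        using finv[OF m, of "(y1,y2,0,0,0,0)"] unfolding e \<phi>_def by simp
    qed
    then obtain B where B: "\<And>y1 y2. norm (\<phi> (y1,y2)) \<le> B" by blast
    have Bw: "norm (f (p + Re w *\<^sub>R u + Im w *\<^sub>R v)) \<le> B" for w
      using B[of "Re w" "Im w"] unfolding Aw \<phi>_def by simp
    have "f (p + Re (Complex t x) *\<^sub>R u + Im (Complex t x) *\<^sub>R v) = f p"
      by (rule const_plane[OF diff CR Bw])
    then show ?thesis unfolding Aw by (simp add: p_def)
  qed
  obtain t x y1 y2 z1 z2 where g: "g = (t,x,y1,y2,z1,z2)" by (cases g) auto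
  show ?thesis using S1[of t x y1 y2 z1 z2] S2[of t x z1 z2] S3[of t x] unfolding g by (simp add: zero_prod_def)
qed



interpretation fs: vector_space fsc by (rule vs)

lemma fzero0: "fzero = (0::form)" by (simp add: fzero_def zero_fun_def)

lemma dim_le_zero: "S \<subseteq> {fzero} \<Longrightarrow> fs.dim S = 0"
proof -
  assume S: "S \<subseteq> {fzero}"
  have "fs.span S \<subseteq> fs.span {0}" using S by (intro fs.span_mono) (simp add: fzero0)
  also have "fs.span {0} = fs.span {}" using fs.span_insert_0[of "{}"] by simp
  finally have "fs.span S = fs.span {}" using fs.span_mono[of "{}" S] by auto
  then have "fs.dim S = fs.dim {}" by (rule fs.span_eq_dim)
  then show ?thesis by (simp add: fs.dim_eq_card_independent fs.independent_empty)
qed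




lemma iterpd_const: "iterpd vs (\<lambda>x. k) = (\<lambda>x. if vs = [] then k else 0)"
proof (induction vs arbitrary: k)
  case Nil then show ?case by simp
next
  case (Cons v vs)
  have "pdiff v (\<lambda>x. c) = (\<lambda>x. 0)" for c :: complex
  proof
    fix x :: pt
    have "(\<lambda>h. 0) = frechet_derivative (\<lambda>x. c) (at x)"
      by (rule frechet_derivative_at) (rule has_derivative_const)
    then show "pdiff v (\<lambda>x. c) x = 0" unfolding pdiff_def by (metis)
  qed
  then show ?case using Cons by (cases vs) auto
qed

lemma smooth_const: "smoothfun (\<lambda>x. k)"
  unfolding smoothfun_def iterpd_const by auto

lemma dfun_const: "dfun (\<lambda>x. k) = fzero"
  by (simp add: dfun_def Efield_def fzero_def fun_eq_iff)

lemma Phi_in: "fsc c Phi1 \<in> HDol_p0 \<Gamma> 1"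
proof -
  let ?a = "fsc c Phi1"
  have cst: "?a I = (\<lambda>x. if I = {0} then c else 0)" for I
    by (auto simp: fsc_def Phi1_def one_def)
  have A: "?a \<in> Apq \<Gamma> 1 0"
    unfolding Apq_def
  proof (intro CollectI conjI allI impI)
    fix I
    show "\<not> bideg 1 0 I \<Longrightarrow> ?a I = (\<lambda>x. 0)"
      unfolding cst by (auto simp: bideg_def)
    show "smoothfun (?a I)" unfolding cst by (simp add: smooth_const)
    show "Gamma_inv \<Gamma> (?a I)" unfolding cst Gamma_inv_def by simp
  qed
  have d0: "dform ?a K x = 0" for K x
    using dform_reduce[OF A, of K x, unfolded S1]
    by (simp add: cst dfun_const evalsimps)
  have "dbar 1 ?a = fzero" "mubar 1 ?a = fzero"
    by (auto simp: dbar_def mubar_def proj_def d0 fzero_def fun_eq_iff)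
  then show ?thesis using A by (simp add: HDol_p0_def)
qed

lemma HDol1_eq:
  assumes a0: "a0 > 0" and det: "p11 * p22 - p12 * p21 \<noteq> 0"
  shows "HDol_p0 (Gamma a0 p11 p12 p21 p22) 1 = range (\<lambda>c. fsc c Phi1)"
proof
  show "range (\<lambda>c. fsc c Phi1) \<subseteq> HDol_p0 (Gamma a0 p11 p12 p21 p22) 1"
    using Phi_in by blast
next
  show "HDol_p0 (Gamma a0 p11 p12 p21 p22) 1 \<subseteq> range (\<lambda>c. fsc c Phi1)"
  proof
    fix a assume h: "a \<in> HDol_p0 (Gamma a0 p11 p12 p21 p22) 1"
    note alg = HDol1_alg[OF h]
    have A: "a \<in> Apq (Gamma a0 p11 p12 p21 p22) 1 0" using h by (simp add: HDol_p0_def)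
    then have sm: "smoothfun (a {0})" and gi: "Gamma_inv (Gamma a0 p11 p12 p21 p22) (a {0})"
      by (auto simp: Apq_def)
    have diff: "\<And>q. a {0} differentiable (at q)"
      using sm unfolding smoothfun_def by (metis empty_subsetI iterpd.simps(1) list.set(1))
    have fc: "a {0} g = a {0} 0" for g
      by (rule f_const[OF diff gi a0 det]) (use alg in auto)
    have "a = fsc (a {0} 0) Phi1"
    proof (intro ext)
      fix I x
      show "a I x = fsc (a {0} 0) Phi1 I x"
      proof (cases "bideg 1 0 I")
        case True
        then have "I \<in> {I. I \<subseteq> {0,1,2::nat} \<and> card I = 1}" by (simp add: bideg0_iff)
        then have "I = {0} \<or> I = {1} \<or> I = {2}" unfolding S1 by simp
        moreover have "a {1} x = 0" "a {2} x = 0" using alg by blast+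
        ultimately show ?thesis using fc by (auto simp: fsc_def Phi1_def one_def)
      next
        case False
        with A have "a I = (\<lambda>x. 0)" by (auto simp: Apq_def)
        moreover have "I \<noteq> {0}" using False by (auto simp: bideg_def)
        ultimately show ?thesis by (simp add: fsc_def Phi1_def one_def)
      qed
    qed
    then show "a \<in> range (\<lambda>c. fsc c Phi1)" by blast
  qed
qed

lemma dim_Phi: "fs.dim (range (\<lambda>c. fsc c Phi1)) = 1"
proof -
  have nz: "Phi1 \<noteq> 0"
  proof
    assume "Phi1 = 0"
    then have "Phi1 {0} 0 = (0::form) {0} 0" by simp
    then show False by (simp add: Phi1_def one_def)
  qed
  have "range (\<lambda>c. fsc c Phi1) = fs.span {Phi1}" by (simp add: fs.span_singleton)
  then have "fs.dim (range (\<lambda>c. fsc c Phi1)) = fs.dim {Phi1}" by simp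
  also have "\<dots> = card {Phi1}" by (rule fs.dim_eq_card_independent) (simp add: nz)
  finally show ?thesis by simp
qed



theorem mainTheorem8:
  fixes b11 b12 b21 b22 :: int and p11 p12 p21 p22 a0 :: real
  assumes "b11 * b22 - b12 * b21 = 1"
    and "a0 > 0"
    and "p11 * p22 - p12 * p21 \<noteq> 0"
    and "p11 * of_int b11 + p12 * of_int b21 = exp a0 * p11"
    and "p11 * of_int b12 + p12 * of_int b22 = exp a0 * p12"
    and "p21 * of_int b11 + p22 * of_int b21 = exp (- a0) * p21"
    and "p21 * of_int b12 + p22 * of_int b22 = exp (- a0) * p22"
  shows "hDol_p0 (Gamma a0 p11 p12 p21 p22) 1 = 1
       \<and> HDol_p0 (Gamma a0 p11 p12 p21 p22) 1 = range (\<lambda>c. fsc c Phi1)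
       \<and> hDol_p0 (Gamma a0 p11 p12 p21 p22) 2 = 0
       \<and> hDol_p0 (Gamma a0 p11 p12 p21 p22) 3 = 0"
proof -
  have H1: "HDol_p0 (Gamma a0 p11 p12 p21 p22) 1 = range (\<lambda>c. fsc c Phi1)"
    by (rule HDol1_eq) (use assms in auto)
  show ?thesis
    unfolding hDol_p0_def
    using H1 dim_Phi dim_le_zero[OF HDol2_zero] dim_le_zero[OF HDol3_zero] by simp
qed

end
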